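(* If $T$ and $T'$ are standard tableaux such that $(T,T')$ is a pair of type $D_j(i)$ for some $i\ge1$ and $1\le j\le4$, then $\digamma(T)=q\,\digamma(T')$.
   Context: Tableaux (French convention: rows of lengths $\lambda_1\ge\lambda_2\ge\cdots$ from bottom to top). A tableau is identified with (shape, reading word), the reading word listing the entries row by row from top row to bottom row, each row left to right. Standard tableau of degree $n$: rows increase left to right, columns increase upwards, entries $1,\dots,n$ each once. Cocharge of a standard word $w$ of degree $n$: $c_1=0$, $c_{i+1}=c_i+1$ if $i+1$ is left of $i$ in $w$, else $c_{i+1}=c_i$; $\mathrm{cocharge}(w)=\sum c_i$; the cocharge of a standard tableau is that of its reading word. With $b=a+1$, $c=a+2$, $d=a+3$: $D_1(a)=(bacd,cabd)$, $D_2(a)=(dbac,dcab)$, $D_3(a)=(acdb,abdc)$, $D_4(a)=(cdba,bdca)$. A pair $(T_1,T_2)$ of tableaux is of type $D_j(a)$ if $T_1$ is obtained from $T_2$ by exchanging the letters $b$ and $c$, and the pair of subwords of the reading words of $T_1$ and $T_2$ formed by the letters $a,b,c,d$ equals $D_j(a)$. Plethystic notation: $X=x_1+\cdots+x_N$, $X^t=X(1-t)$, and $S_\mu[X^t]$ is the Schur function with $p_k$ replaced by $p_k[X](1-t^k)$. $\digamma$ sends a standard tableau $T$ to $q^{\mathrm{cocharge}(T)}S_{\mathrm{shape}(T)}[X^t]$. *)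

theory Defs
  imports Complex_Main "HOL-Combinatorics.Permutations"
begin

text \<open>The shape lists the row lengths
  lambda_1 >= lambda_2 >= ... from the bottom row (index 0) upwards; the reading word
  lists the rows from the top row down to the bottom row, each row left to right.\<close>

type_synonym tableau = "nat list \<times> nat list"

definition shape :: "tableau \<Rightarrow> nat list" where "shape T = fst T"
definition rword :: "tableau \<Rightarrow> nat list" where "rword T = snd T"

definition is_partition :: "nat list \<Rightarrow> bool" where
  "is_partition la \<longleftrightarrow> sorted_wrt (\<ge>) la \<and> (\<forall>k \<in> set la. 0 < k)"

definition row_offset :: "nat list \<Rightarrow> nat \<Rightarrow> nat" where
  "row_offset la r = sum_list (drop (Suc r) la)"

text \<open>Entry in row r (from bottom), column c (from left), both 0-based.\<close>
definition entry :: "tableau \<Rightarrow> nat \<Rightarrow> nat \<Rightarrow> nat" where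
  "entry T r c = rword T ! (row_offset (shape T) r + c)"

definition standard :: "tableau \<Rightarrow> bool" where
  "standard T \<longleftrightarrow>
     is_partition (shape T) \<and>
     length (rword T) = sum_list (shape T) \<and>
     distinct (rword T) \<and> set (rword T) = {1..length (rword T)} \<and>
     (\<forall>r c. r < length (shape T) \<and> Suc c < shape T ! r \<longrightarrow> entry T r c < entry T r (Suc c)) \<and>
     (\<forall>r c. Suc r < length (shape T) \<and> c < shape T ! Suc r \<longrightarrow> entry T r c < entry T (Suc r) c)"

definition pos :: "nat list \<Rightarrow> nat \<Rightarrow> nat" where
  "pos w a = (LEAST k. k < length w \<and> w ! k = a)"

fun cc :: "nat list \<Rightarrow> nat \<Rightarrow> nat" where
  "cc w 0 = 0"
| "cc w (Suc 0) = 0"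
| "cc w (Suc (Suc i)) = cc w (Suc i) + (if pos w (Suc (Suc i)) < pos w (Suc i) then 1 else 0)"

definition cocharge_word :: "nat list \<Rightarrow> nat" where
  "cocharge_word w = (\<Sum>i = 1..length w. cc w i)"

definition cocharge :: "tableau \<Rightarrow> nat" where
  "cocharge T = cocharge_word (rword T)"

definition D :: "nat \<Rightarrow> nat \<Rightarrow> nat list \<times> nat list" where
  "D j a = (let b = a + 1; c = a + 2; d = a + 3 in
     if j = 1 then ([b,a,c,d], [c,a,b,d])
     else if j = 2 then ([d,b,a,c], [d,c,a,b])
     else if j = 3 then ([a,c,d,b], [a,b,d,c])
     else ([c,d,b,a], [b,d,c,a]))"

definition swap_letters :: "nat \<Rightarrow> nat \<Rightarrow> nat \<Rightarrow> nat" where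
  "swap_letters b c x = (if x = b then c else if x = c then b else x)"

definition subword :: "nat \<Rightarrow> nat list \<Rightarrow> nat list" where
  "subword a w = filter (\<lambda>x. a \<le> x \<and> x \<le> a + 3) w"

definition pair_of_type :: "nat \<Rightarrow> nat \<Rightarrow> tableau \<Rightarrow> tableau \<Rightarrow> bool" where
  "pair_of_type j a T1 T2 \<longleftrightarrow>
     shape T1 = shape T2 \<and>
     rword T1 = map (swap_letters (a + 1) (a + 2)) (rword T2) \<and>
     (subword a (rword T1), subword a (rword T2)) = D j a"

definition h_sym :: "nat \<Rightarrow> (nat \<Rightarrow> real) \<Rightarrow> nat \<Rightarrow> real" where
  "h_sym N x k = (\<Sum>a \<in> {a :: nat \<Rightarrow> nat. (\<forall>i. N \<le> i \<longrightarrow> a i = 0) \<and> (\<Sum>i<N. a i) = k}.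
                    \<Prod>i<N. x i ^ a i)"

definition e_sym :: "nat \<Rightarrow> (nat \<Rightarrow> real) \<Rightarrow> nat \<Rightarrow> real" where
  "e_sym N x k = (\<Sum>S \<in> {S. S \<subseteq> {..<N} \<and> card S = k}. \<Prod>i\<in>S. x i)"

text \<open>h_k[X(1-t)] = sum_j h_{k-j}[X] (-t)^j e_j[X]; zero for k < 0.\<close>
definition h_pleth :: "nat \<Rightarrow> (nat \<Rightarrow> real) \<Rightarrow> real \<Rightarrow> int \<Rightarrow> real" where
  "h_pleth N x t k = (if k < 0 then 0 else
     (\<Sum>j \<le> nat k. h_sym N x (nat k - j) * (- t) ^ j * e_sym N x j))"

text \<open>Jacobi--Trudi: S_mu[X^t] = det (h_{mu_i - i + j}[X^t]).\<close>
definition schur_pleth :: "nat list \<Rightarrow> nat \<Rightarrow> (nat \<Rightarrow> real) \<Rightarrow> real \<Rightarrow> real" where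
  "schur_pleth mu N x t =
     (\<Sum>p | p permutes {..<length mu}. of_int (sign p) *
        (\<Prod>i<length mu. h_pleth N x t (int (mu ! i) - int i + int (p i))))"

definition digamma :: "tableau \<Rightarrow> nat \<Rightarrow> (nat \<Rightarrow> real) \<Rightarrow> real \<Rightarrow> real \<Rightarrow> real" where
  "digamma T N x q t = q ^ cocharge T * schur_pleth (shape T) N x t"

end

theory Submission
  imports Defs
begin

lemma pos_Cons: "x \<in> set (z#w) \<Longrightarrow> pos (z#w) x = (if z = x then 0 else Suc (pos w x))"
proof (cases "z = x")
  case True thus ?thesis unfolding pos_def by (intro Least_equality) auto
next
  case False
  assume "x \<in> set (z#w)"
  with False have "x \<in> set w" by auto
  then obtain k where k: "k < length w" "w ! k = x" by (auto simp: in_set_conv_nth)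
  have "(LEAST n. n < length (z#w) \<and> (z#w) ! n = x) = Suc (LEAST m. Suc m < length (z#w) \<and> (z#w) ! Suc m = x)"
    by (rule Least_Suc[of _ "Suc k"]) (use k False in auto)
  thus ?thesis using False unfolding pos_def by simp
qed

lemma pos_filter:
  "distinct w \<Longrightarrow> x \<in> set w \<Longrightarrow> y \<in> set w \<Longrightarrow> P x \<Longrightarrow> P y \<Longrightarrow>
   (pos w x < pos w y) = (pos (filter P w) x < pos (filter P w) y)"
proof (induction w)
  case Nil thus ?case by simp
next
  case (Cons z w)
  show ?case
  proof (cases "z = x \<or> z = y")
    case True thus ?thesis using Cons.prems by (auto simp: pos_Cons)
  next
    case False
    hence "x \<in> set w" "y \<in> set w" using Cons.prems by auto
    thus ?thesis using Cons False by (auto simp: pos_Cons)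
  qed
qed

lemma ord_sub:
  assumes "distinct w" "subword a w = s" "x \<in> set s" "y \<in> set s"
  shows "(pos w x < pos w y) = (pos s x < pos s y)"
proof -
  have "x \<in> set w" "y \<in> set w" "a \<le> x \<and> x \<le> a + 3" "a \<le> y \<and> y \<le> a + 3"
    using assms unfolding subword_def by auto
  thus ?thesis using assms pos_filter[of w x y "\<lambda>x. a \<le> x \<and> x \<le> a + 3"]
    unfolding subword_def by auto
qed

lemma pos_map_swap: "m \<noteq> b \<Longrightarrow> m \<noteq> c \<Longrightarrow> pos (map (swap_letters b c) w) m = pos w m"
proof -
  assume "m \<noteq> b" "m \<noteq> c"
  hence "(\<lambda>k. k < length (map (swap_letters b c) w) \<and> map (swap_letters b c) w ! k = m) = (\<lambda>k. k < length w \<and> w ! k = m)"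
    by (intro ext) (auto simp: swap_letters_def split: if_splits)
  thus ?thesis unfolding pos_def by simp
qed

definition inc :: "nat list \<Rightarrow> nat \<Rightarrow> nat" where
  "inc w m = (if pos w m < pos w (m - 1) then 1 else 0)"

lemma cc_shift:
  assumes "\<And>m. inc w (Suc (Suc m)) + g (Suc m) = inc w' (Suc (Suc m)) + g (Suc (Suc m))"
    and "g 0 = 0" "g 1 = 0"
  shows "cc w k = cc w' k + g k"
proof -
  have "cc w (Suc i) = cc w' (Suc i) + g (Suc i)" for i
  proof (induction i)
    case 0 thus ?case using assms by simp
  next
    case (Suc i)
    have "cc w (Suc (Suc i)) = cc w (Suc i) + inc w (Suc (Suc i))"
         "cc w' (Suc (Suc i)) = cc w' (Suc i) + inc w' (Suc (Suc i))"
      by (simp_all add: inc_def)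
    thus ?case using Suc assms(1)[of i] by simp
  qed
  thus ?thesis using assms by (cases k) auto
qed

lemma cocharge_step:
  assumes "length w = length w'" "e \<in> set w" "set w = {1..length w}" "2 \<le> e"
    and "\<And>m. inc w (Suc (Suc m)) + (if Suc m = e then 1 else 0)
              = inc w' (Suc (Suc m)) + (if Suc (Suc m) = e then 1 else 0)"
  shows "cocharge_word w = cocharge_word w' + 1"
proof -
  have cc: "cc w k = cc w' k + (if k = e then 1 else 0)" for k
    by (rule cc_shift[where g="\<lambda>k. if k = e then 1 else 0"]) (use assms in auto)
  have e: "e \<in> {1..length w}" using assms by auto
  have "cocharge_word w = (\<Sum>k = 1..length w. cc w' k + (if k = e then 1 else 0))"
    unfolding cocharge_word_def using cc by simp
  also have "\<dots> = cocharge_word w' + 1"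
    unfolding sum.distrib cocharge_word_def using e assms(1) by simp
  finally show ?thesis .
qed

lemma inc_other:
  assumes "w = map (swap_letters (a+1) (a+2)) w'" "m \<noteq> a+1" "m \<noteq> a+2" "m \<noteq> a+3"
  shows "inc w m = inc w' m"
proof -
  have "m - 1 \<noteq> a+1" "m - 1 \<noteq> a+2" using assms by auto
  thus ?thesis using assms unfolding inc_def by (simp add: pos_map_swap)
qed

lemma cond_all:
  assumes "w = map (swap_letters (a+1) (a+2)) w'" "e = a+1 \<or> e = a+2"
    and "inc w (a+1) = inc w' (a+1) + (if a+1 = e then 1 else 0)"
    and "inc w (a+2) + (if a+1 = e then 1 else 0) = inc w' (a+2) + (if a+2 = e then 1 else 0)"
    and "inc w (a+3) + (if a+2 = e then 1 else 0) = inc w' (a+3)"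
  shows "inc w (Suc (Suc m)) + (if Suc m = e then 1 else 0)
              = inc w' (Suc (Suc m)) + (if Suc (Suc m) = e then 1 else 0)"
proof -
  consider "Suc (Suc m) = a+1" | "Suc (Suc m) = a+2" | "Suc (Suc m) = a+3"
    | "Suc (Suc m) \<noteq> a+1 \<and> Suc (Suc m) \<noteq> a+2 \<and> Suc (Suc m) \<noteq> a+3" by blast
  thus ?thesis
  proof cases
    case 1 thus ?thesis using assms(2,3) by auto
  next
    case 2
    hence "Suc m = a + 1" by simp
    thus ?thesis using 2 assms(4) by simp
  next
    case 3
    hence "Suc m = a + 2" by simp
    thus ?thesis using 3 assms(2,5) by (auto simp: eval_nat_numeral)
  next
    case 4
    thus ?thesis using assms(1,2) inc_other[OF assms(1), of "Suc (Suc m)"] by auto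
  qed
qed

theorem lemma23:
  fixes T T' :: tableau and i j :: nat
  assumes "standard T" and "standard T'"
    and "1 \<le> i" and "1 \<le> j" and "j \<le> 4"
    and "pair_of_type j i T T'"
  shows "\<forall>N x q t. digamma T N x q t = q * digamma T' N x q t"
proof -
  define w where "w = rword T"
  define w' where "w' = rword T'"
  have dw: "distinct w" "set w = {1..length w}" and dw': "distinct w'"
    using assms(1,2) unfolding standard_def w_def w'_def by auto
  have sh: "shape T = shape T'" and wm: "w = map (swap_letters (i+1) (i+2)) w'"
    and sub: "(subword i w, subword i w') = D j i"
    using assms(6) unfolding pair_of_type_def w_def w'_def by auto
  have len: "length w = length w'" using wm by simp
  have o: "(pos w x < pos w y) = (pos s x < pos s y)"
    if "subword i w = s" "x \<in> set s" "y \<in> set s" for x y s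
    using ord_sub[OF dw(1) that] .
  have o': "(pos w' x < pos w' y) = (pos s x < pos s y)"
    if "subword i w' = s" "x \<in> set s" "y \<in> set s" for x y s
    using ord_sub[OF dw' that] .
  have inset: "x \<in> set w" if "x \<in> set (subword i w)" for x
    using that unfolding subword_def by simp
  have key: "cocharge_word w = cocharge_word w' + 1"
  proof -
    have "j = 1 \<or> j = 2 \<or> j = 3 \<or> j = 4" using assms(4,5) by auto
    then consider (1) "j = 1" | (2) "j = 2" | (3) "j = 3" | (4) "j = 4" by blast
    thus ?thesis
    proof cases
      case 1
      hence s: "subword i w = [i+1,i,i+2,i+3]" and s': "subword i w' = [i+2,i,i+1,i+3]"
        using sub by (simp_all add: D_def Let_def)
      note A = o[OF s] and B = o'[OF s']
      show ?thesis
      proof (rule cocharge_step[OF len _ dw(2), of "i+1"])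
        show "i + 1 \<in> set w" using inset s by simp
      next
        fix m
        show "inc w (Suc (Suc m)) + (if Suc m = i+1 then 1 else 0)
              = inc w' (Suc (Suc m)) + (if Suc (Suc m) = i+1 then 1 else 0)"
          by (rule cond_all[OF wm]) (auto simp: inc_def A B pos_Cons)
      qed (use assms(3) in simp)
    next
      case 2
      hence s: "subword i w = [i+3,i+1,i,i+2]" and s': "subword i w' = [i+3,i+2,i,i+1]"
        using sub by (simp_all add: D_def Let_def)
      note A = o[OF s] and B = o'[OF s']
      show ?thesis
      proof (rule cocharge_step[OF len _ dw(2), of "i+1"])
        show "i + 1 \<in> set w" using inset s by simp
      next
        fix m
        show "inc w (Suc (Suc m)) + (if Suc m = i+1 then 1 else 0)
              = inc w' (Suc (Suc m)) + (if Suc (Suc m) = i+1 then 1 else 0)"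
          by (rule cond_all[OF wm]) (auto simp: inc_def A B pos_Cons)
      qed (use assms(3) in simp)
    next
      case 3
      hence s: "subword i w = [i,i+2,i+3,i+1]" and s': "subword i w' = [i,i+1,i+3,i+2]"
        using sub by (simp_all add: D_def Let_def)
      note A = o[OF s] and B = o'[OF s']
      show ?thesis
      proof (rule cocharge_step[OF len _ dw(2), of "i+2"])
        show "i + 2 \<in> set w" using inset s by simp
      next
        fix m
        show "inc w (Suc (Suc m)) + (if Suc m = i+2 then 1 else 0)
              = inc w' (Suc (Suc m)) + (if Suc (Suc m) = i+2 then 1 else 0)"
          by (rule cond_all[OF wm]) (auto simp: inc_def A B pos_Cons)
      qed (use assms(3) in simp)
    next
      case 4
      hence s: "subword i w = [i+2,i+3,i+1,i]" and s': "subword i w' = [i+1,i+3,i+2,i]"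
        using sub by (simp_all add: D_def Let_def)
      note A = o[OF s] and B = o'[OF s']
      show ?thesis
      proof (rule cocharge_step[OF len _ dw(2), of "i+2"])
        show "i + 2 \<in> set w" using inset s by simp
      next
        fix m
        show "inc w (Suc (Suc m)) + (if Suc m = i+2 then 1 else 0)
              = inc w' (Suc (Suc m)) + (if Suc (Suc m) = i+2 then 1 else 0)"
          by (rule cond_all[OF wm]) (auto simp: inc_def A B pos_Cons)
      qed (use assms(3) in simp)
    qed
  qed
  show ?thesis
    using key sh unfolding digamma_def cocharge_def w_def w'_def by simp
qed

end
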